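(* For integers $q\ge1$, $a$, $n$ let $S(q,a,n)=\sum_{x=1}^q e\big(\frac{ax^2+nx}{q}\big)$, and for integers $n_1,n_2,n_3,m$ let $$T(q;n_1,n_2,n_3,m)=\sum_{\substack{a=1\\ (a,q)=1}}^q S(q,a,n_1)S(q,a,n_2)S(q,a,n_3)\,e\Big(\frac{\overline{a}\,m}{q}\Big),$$ where $\overline{a}$ is the inverse of $a$ modulo $q$. Then for every positive integer $r$ and all integers $n_1,n_2,n_3,m$, $$|T(2^r;n_1,n_2,n_3,m)|\le 2^{2+5r/2}.$$
   Context: $e(z)=e^{2\pi i z}$. *)

theory Defs
  imports "HOL-Analysis.Analysis" "HOL-Number_Theory.Cong"
begin

definition e :: "real \<Rightarrow> complex" where
  "e z = exp (2 * of_real pi * \<i> * of_real z)"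

definition S :: "int \<Rightarrow> int \<Rightarrow> int \<Rightarrow> complex" where
  "S q a n = (\<Sum>x = 1..q. e (of_int (a * x^2 + n * x) / of_int q))"

definition inv_mod :: "int \<Rightarrow> int \<Rightarrow> int" where
  "inv_mod q a = (THE b. b \<in> {0..<q} \<and> [a * b = 1] (mod q))"

definition T :: "int \<Rightarrow> int \<Rightarrow> int \<Rightarrow> int \<Rightarrow> int \<Rightarrow> complex" where
  "T q n1 n2 n3 m = (\<Sum>a \<in> {a \<in> {1..q}. coprime a q}.
      S q a n1 * S q a n2 * S q a n3 * e (of_int (inv_mod q a * m) / of_int q))"

end

theory Submission
  imports Defs
begin

lemma e_add: "e (x + y) = e x * e y"
  by (simp add: e_def ring_distribs exp_add)

lemma e_int: "e (of_int k) = 1"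
proof -
  have "e (of_int k) = exp ((2 * complex_of_int k * pi) * \<i>)"
    unfolding e_def by (simp add: algebra_simps)
  also have "\<dots> = 1" using exp_integer_2pi[of "of_int k"] by (simp add: mult.assoc)
  finally show ?thesis .
qed

lemma e_norm: "cmod (e x) = 1"
  by (simp add: e_def)

lemma e_cnj: "cnj (e x) = e (- x)"
  by (simp add: e_def exp_cnj)

lemma e_one: assumes "e x = 1" shows "x \<in> \<int>"
proof -
  from assms obtain n :: int where "2 * pi * x = of_int (2*n) * pi"
    unfolding e_def exp_eq_1 by auto
  hence "x = of_int n" by simp
  thus ?thesis by simp
qed

definition E :: "int \<Rightarrow> int \<Rightarrow> complex" where
  "E q k = e (of_int k / of_int q)"

lemma E_add: "E q (k + l) = E q k * E q l"
  unfolding E_def by (simp add: add_divide_distrib e_add)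

lemma E_mod: assumes "q > 0" shows "E q (k mod q) = E q k"
proof -
  have "k = q * (k div q) + k mod q" by simp
  hence "E q k = E q (q * (k div q)) * E q (k mod q)" by (metis E_add)
  moreover have "E q (q * (k div q)) = 1"
    unfolding E_def using assms by (simp add: e_int)
  ultimately show ?thesis by simp
qed

lemma E_norm: "cmod (E q k) = 1" by (simp add: E_def e_norm)

lemma E_cnj: "cnj (E q k) = E q (- k)" by (simp add: E_def e_cnj)

lemma E_one: assumes "E q k = 1" "q > 0" shows "q dvd k"
proof -
  from e_one[OF assms(1)[unfolded E_def]] obtain j where "of_int k / of_int q = (of_int j :: real)"
    by (auto elim: Ints_cases)
  hence "k = j * q" using assms(2) by (simp add: field_simps) (metis of_int_eq_iff of_int_mult)
  thus ?thesis by simp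
qed

lemma shift_sum:
  fixes f :: "int \<Rightarrow> complex"
  assumes q: "q > 0" and per: "\<And>x. f (x mod q) = f x"
  shows "(\<Sum>x\<in>{0..<q}. f x) = (\<Sum>h\<in>{0..<q}. f (y + h))"
proof -
  have "(\<Sum>h\<in>{0..<q}. f (y + h)) = (\<Sum>h\<in>{0..<q}. f ((y + h) mod q))"
    by (simp add: per)
  also have "\<dots> = (\<Sum>x\<in>{0..<q}. f x)"
    by (rule sum.reindex_bij_witness[where i="\<lambda>x. (x - y) mod q" and j="\<lambda>h. (y + h) mod q"])
       (use q in \<open>auto simp: mod_simps\<close>)
  finally show ?thesis by simp
qed

lemma sum_1q:
  fixes f :: "int \<Rightarrow> complex"
  assumes q: "q > 0" and per: "\<And>x. f (x mod q) = f x"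
  shows "(\<Sum>x=1..q. f x) = (\<Sum>x\<in>{0..<q}. f x)"
proof -
  have "{1..q} = insert q {1..<q}" "{0..<q} = insert 0 {1..<q}" using q by auto
  moreover have "f q = f 0" using per[of q] by simp
  ultimately show ?thesis by simp
qed

lemma G_zero:
  assumes q: "q > 0" and ne: "E q c \<noteq> 1"
  shows "(\<Sum>y\<in>{0..<q}. E q (c * y)) = 0"
proof -
  let ?G = "(\<Sum>y\<in>{0..<q}. E q (c * y))"
  have per: "E q (c * (y mod q)) = E q (c * y)" for y
  proof -
    have "(c * (y mod q)) mod q = (c * y) mod q" by (simp add: mod_simps)
    thus ?thesis using E_mod[OF q] by metis
  qed
  have "?G = (\<Sum>h\<in>{0..<q}. E q (c * (1 + h)))"
    by (rule shift_sum[OF q]) (rule per)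
  also have "\<dots> = (\<Sum>h\<in>{0..<q}. E q c * E q (c * h))"
    by (simp add: distrib_left E_add)
  also have "\<dots> = E q c * ?G" by (simp add: sum_distrib_left)
  finally have "(1 - E q c) * ?G = 0" by (simp add: algebra_simps)
  with ne show ?thesis by simp
qed

lemma G_norm: assumes q: "q > 0" shows "cmod (\<Sum>y\<in>{0..<q}. E q (c * y)) \<le> of_int q"
proof -
  have "cmod (\<Sum>y\<in>{0..<q}. E q (c * y)) \<le> (\<Sum>y\<in>{0..<q}. cmod (E q (c * y)))"
    by (rule norm_sum)
  also have "\<dots> = of_nat (card {0..<q})" by (simp add: E_norm)
  also have "\<dots> = of_int q" using q by simp
  finally show ?thesis by simp
qed

lemma S_sq:
  assumes q: "q > 0" and cop: "coprime a q"
  shows "(cmod (S q a n))^2 \<le> 2 * of_int q"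
proof -
  define P where "P x = a * x^2 + n * x" for x
  define I where "I = {0..<q}"
  define G where "G h = (\<Sum>y\<in>I. E q ((2*a*h) * y))" for h
  have Pmod: "P (x mod q) mod q = P x mod q" for x
  proof -
    have "[x mod q = x] (mod q)" by (simp add: cong_def)
    hence "[a*(x mod q)^2 + n*(x mod q) = a*x^2+n*x] (mod q)"
      by (intro cong_add cong_mult cong_pow cong_refl)
    thus ?thesis unfolding P_def cong_def .
  qed
  have S1: "S q a n = (\<Sum>x\<in>I. E q (P x))"
  proof -
    have "S q a n = (\<Sum>x=1..q. E q (P x))" unfolding S_def E_def P_def by simp
    also have "\<dots> = (\<Sum>x\<in>I. E q (P x))" unfolding I_def
      by (rule sum_1q[OF q]) (metis E_mod[OF q] Pmod)
    finally show ?thesis .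
  qed
  have inner: "(\<Sum>x\<in>I. E q (P x - P y)) = (\<Sum>h\<in>I. E q (a*h^2 + n*h) * E q ((2*a*h) * y))" for y
  proof -
    have "(\<Sum>x\<in>I. E q (P x - P y)) = (\<Sum>h\<in>I. E q (P (y + h) - P y))"
      unfolding I_def
    proof (rule shift_sum[OF q])
      fix x
      have "(P (x mod q) - P y) mod q = (P x - P y) mod q"
        using Pmod by (metis mod_diff_cong)
      thus "E q (P (x mod q) - P y) = E q (P x - P y)" by (metis E_mod[OF q])
    qed
    also have "\<dots> = (\<Sum>h\<in>I. E q (a*h^2 + n*h) * E q ((2*a*h) * y))"
    proof (rule sum.cong[OF refl])
      fix h
      have "P (y + h) - P y = (a*h^2 + n*h) + (2*a*h) * y"
        unfolding P_def by (simp add: algebra_simps power2_eq_square)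
      thus "E q (P (y + h) - P y) = E q (a*h^2 + n*h) * E q ((2*a*h) * y)"
        by (simp add: E_add)
    qed
    finally show ?thesis .
  qed
  have "S q a n * cnj (S q a n) = (\<Sum>x\<in>I. \<Sum>y\<in>I. E q (P x) * E q (- P y))"
    unfolding S1 by (simp add: sum_product E_cnj)
  also have "\<dots> = (\<Sum>y\<in>I. \<Sum>x\<in>I. E q (P x - P y))"
    by (subst sum.swap) (simp add: E_add[symmetric])
  also have "\<dots> = (\<Sum>y\<in>I. \<Sum>h\<in>I. E q (a*h^2 + n*h) * E q ((2*a*h) * y))"
    by (simp add: inner)
  also have "\<dots> = (\<Sum>h\<in>I. E q (a*h^2 + n*h) * G h)"
    unfolding G_def by (subst sum.swap) (simp add: sum_distrib_left)
  finally have eq: "S q a n * cnj (S q a n) = (\<Sum>h\<in>I. E q (a*h^2 + n*h) * G h)" .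
  define A where "A = {h\<in>I. E q (2*a*h) = 1}"
  have fin: "finite I" unfolding I_def by simp
  have AI: "A \<subseteq> I" unfolding A_def by auto
  have Asub: "A \<subseteq> {0, q div 2}"
  proof
    fix h assume h: "h \<in> A"
    hence h0: "0 \<le> h" "h < q" and "E q (2*a*h) = 1" unfolding A_def I_def by auto
    hence "q dvd a * (2*h)" using E_one q by (metis mult.assoc mult.left_commute)
    hence "q dvd 2*h" using cop by (metis coprime_commute coprime_dvd_mult_right_iff)
    then obtain k where k: "2*h = q*k" by blast
    have "q*k \<ge> 0" using k h0 by simp
    hence "k \<ge> 0" using q by (simp add: zero_le_mult_iff)
    moreover have "q*k < q*2" using k h0 by linarith
    hence "k < 2" using q by (simp only: mult_less_cancel_left)
    ultimately have "k = 0 \<or> k = 1" by auto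
    thus "h \<in> {0, q div 2}" using k by auto
  qed
  have cardA: "card A \<le> 2"
  proof -
    have "card A \<le> card {0, q div 2}" by (rule card_mono[OF _ Asub]) simp
    also have "\<dots> \<le> 2" by (simp add: card_insert_if)
    finally show ?thesis .
  qed
  have "(cmod (S q a n))^2 = cmod (S q a n * cnj (S q a n))"
    by (simp add: norm_mult power2_eq_square)
  also have "\<dots> \<le> (\<Sum>h\<in>I. cmod (E q (a*h^2 + n*h) * G h))"
    unfolding eq by (rule norm_sum)
  also have "\<dots> = (\<Sum>h\<in>I. cmod (G h))" by (simp add: norm_mult E_norm)
  also have "\<dots> = (\<Sum>h\<in>A. cmod (G h))"
  proof (rule sum.mono_neutral_right[OF fin AI])
    show "\<forall>h\<in>I - A. cmod (G h) = 0"
      unfolding A_def G_def I_def using G_zero[OF q] by auto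
  qed
  also have "\<dots> \<le> (\<Sum>h\<in>A. of_int q)"
    by (rule sum_mono) (simp add: G_def I_def G_norm[OF q])
  also have "\<dots> = of_nat (card A) * of_int q" by simp
  also have "\<dots> \<le> 2 * of_int q" using cardA q by (simp add: mult_right_mono)
  finally show ?thesis .
qed

theorem lemma3p6:
  fixes r :: nat and n1 n2 n3 m :: int
  assumes "r \<ge> 1"
  shows "cmod (T (2^r) n1 n2 n3 m) \<le> 2 powr (2 + 5 * real r / 2)"
proof -
  define q :: int where "q = 2^r"
  have q: "q > 0" unfolding q_def by simp
  define B where "B = sqrt (2 * real_of_int q)"
  define C where "C = {a \<in> {1..q}. coprime a q}"
  have SB: "cmod (S q a n) \<le> B" if "coprime a q" for a n
    unfolding B_def using S_sq[OF q that, of n] by (simp add: real_le_rsqrt)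
  have B0: "B \<ge> 0" unfolding B_def using q by simp
  have "cmod (T q n1 n2 n3 m) \<le> (\<Sum>a\<in>C. cmod (S q a n1 * S q a n2 * S q a n3 * e (of_int (inv_mod q a * m) / of_int q)))"
    unfolding T_def C_def by (rule norm_sum)
  also have "\<dots> = (\<Sum>a\<in>C. cmod (S q a n1) * cmod (S q a n2) * cmod (S q a n3))"
    by (simp add: norm_mult e_norm)
  also have "\<dots> \<le> (\<Sum>a\<in>C. B * B * B)"
  proof (rule sum_mono)
    fix a assume "a \<in> C"
    hence c: "coprime a q" unfolding C_def by simp
    show "cmod (S q a n1) * cmod (S q a n2) * cmod (S q a n3) \<le> B * B * B"
      using SB[OF c, of n1] SB[OF c, of n2] SB[OF c, of n3]
      using B0 by (intro mult_mono) auto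
  qed
  also have "\<dots> = real (card C) * (B * B * B)" by simp
  also have "\<dots> \<le> real_of_int q * (B * B * B)"
  proof (rule mult_right_mono)
    have "card C \<le> card {1..q}" unfolding C_def by (rule card_mono) auto
    hence "real (card C) \<le> real (nat q)" by simp
    thus "real (card C) \<le> real_of_int q" using q by simp
  qed (use B0 in simp)
  also have "\<dots> = 2 powr (real r + 3 * ((real r + 1) / 2))"
  proof -
    have qr: "real_of_int q = 2 powr real r" unfolding q_def by (simp add: powr_realpow)
    have "2 * real_of_int q = 2 powr (real r + 1)" unfolding qr by (simp add: powr_add)
    hence "B = 2 powr ((real r + 1) / 2)" unfolding B_def
      by (simp add: powr_half_sqrt[symmetric] powr_powr)
    hence "real_of_int q * (B * B * B) = 2 powr (real r + (real r + 1) / 2 + (real r + 1) / 2 + (real r + 1) / 2)"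
      unfolding qr by (simp only: powr_add mult.assoc)
    also have "real r + (real r + 1) / 2 + (real r + 1) / 2 + (real r + 1) / 2 = real r + 3 * ((real r + 1) / 2)"
      by simp
    finally show ?thesis .
  qed
  also have "\<dots> \<le> 2 powr (2 + 5 * real r / 2)"
    by (rule powr_mono) (auto simp: field_simps)
  finally show ?thesis unfolding q_def by simp
qed

end
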